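(* Let $k\geq 2$, $n,m,p,z$ be nonnegative integers, and let $R\in\mathcal R^n_{m,p,z}\cap\mathcal M$. Let $w$ be chosen uniformly at random from $[k]^n$, and let $B_R$ be the event that $w$ contains a regular pair of twins $(w_1,w_2)$ with $R(w_1,w_2,w)=R$. Then \[ \Pr[B_R]=(1/k)^m(1-1/k)^{p+n-2m-z}. \]
   Context: $[k]=\{1,\dots,k\}$; $w[i]$ is the $i$-th letter of $w$. Two subsequences of $w$ are twins if they are equal as words and use disjoint sets of positions of $w$. Twins $(w_1,w_2)$ are monotone if for every $i$ the $i$-th letter of $w_1$ occurs in $w$ before the $i$-th letter of $w_2$. For monotone twins, $R(w_1,w_2,w)\in\{0,1,2\}^n$ is given by $R[i]=0$ if position $i$ is in neither twin, $1$ if it is in $w_1$, $2$ if it is in $w_2$. Monotone twins are regular if (a) there are no $i<j$ with $R[i]=2$, $R[j]=1$, $R[k']=0$ for all $i<k'<j$, and $w[i]=w[j]$; and (b) there are no $i<j$ with $R[i]\in\{1,2\}$, $R[j]=0$, $R[k']=0$ for all $i<k'<j$, and $w[i]=w[j]$. $\mathcal R^n_m$ is the set of words in $\{0,1,2\}^n$ in which the letters $1$ and $2$ each occur exactly $m$ times. For $R\in\{0,1,2\}^n$, $p(R)$ is the number of occurrences of the pattern consisting of a $2$, followed by zero or more $0$'s, followed by a $1$ (as consecutive letters), and $z(R)$ is the length of the longest prefix of $R$ consisting only of $0$'s. $\mathcal R^n_{m,p,z}=\{R\in\mathcal R^n_m: p(R)=p,\ z(R)=z\}$. $\mathcal M$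 is the set of words in $\{0,1,2\}^n$ in which every prefix contains at least as many $1$'s as $2$'s. *)

theory Defs
  imports Complex_Main
begin

text \<open>Words are lists, indexed from 0. A word over [k] is a list with letters in {1..k}.\<close>

definition words :: "nat \<Rightarrow> nat \<Rightarrow> nat list set" where
  "words k n = {w. length w = n \<and> set w \<subseteq> {1..k}}"

text \<open>A subsequence of w is given by its set of positions I (a subset of {0..<length w});
  the word it spells is nths w I.  Twins: two disjoint position sets spelling the same word.\<close>

definition twins :: "'a list \<Rightarrow> nat set \<Rightarrow> nat set \<Rightarrow> bool" where
  "twins w I1 I2 \<longleftrightarrow> I1 \<subseteq> {0..<length w} \<and> I2 \<subseteq> {0..<length w} \<and>
     I1 \<inter> I2 = {} \<and> nths w I1 = nths w I2"

definition monotone_twins :: "'a list \<Rightarrow> nat set \<Rightarrow> nat set \<Rightarrow> bool" where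
  "monotone_twins w I1 I2 \<longleftrightarrow> twins w I1 I2 \<and>
     (\<forall>i < card I1. sorted_list_of_set I1 ! i < sorted_list_of_set I2 ! i)"

definition Rword :: "nat \<Rightarrow> nat set \<Rightarrow> nat set \<Rightarrow> nat list" where
  "Rword n I1 I2 = map (\<lambda>i. if i \<in> I1 then 1 else if i \<in> I2 then 2 else 0) [0..<n]"

definition regular_twins :: "nat list \<Rightarrow> nat set \<Rightarrow> nat set \<Rightarrow> bool" where
  "regular_twins w I1 I2 \<longleftrightarrow> monotone_twins w I1 I2 \<and>
     (let R = Rword (length w) I1 I2 in
       (\<not> (\<exists>i j. i < j \<and> j < length w \<and> R ! i = 2 \<and> R ! j = 1 \<and>
            (\<forall>k'. i < k' \<and> k' < j \<longrightarrow> R ! k' = 0) \<and> w ! i = w ! j)) \<and>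
       (\<not> (\<exists>i j. i < j \<and> j < length w \<and> R ! i \<in> {1,2} \<and> R ! j = 0 \<and>
            (\<forall>k'. i < k' \<and> k' < j \<longrightarrow> R ! k' = 0) \<and> w ! i = w ! j)))"

definition event_B :: "nat list \<Rightarrow> nat list \<Rightarrow> bool" where
  "event_B R w \<longleftrightarrow> (\<exists>I1 I2. regular_twins w I1 I2 \<and> Rword (length w) I1 I2 = R)"

definition Rset :: "nat \<Rightarrow> nat \<Rightarrow> nat list set" where
  "Rset n m = {R. length R = n \<and> set R \<subseteq> {0,1,2} \<and> count_list R 1 = m \<and> count_list R 2 = m}"

definition pR :: "nat list \<Rightarrow> nat" where
  "pR R = card {(i,j). i < j \<and> j < length R \<and> R ! i = 2 \<and> R ! j = 1 \<and>
                       (\<forall>k'. i < k' \<and> k' < j \<longrightarrow> R ! k' = 0)}"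

definition zR :: "nat list \<Rightarrow> nat" where
  "zR R = length (takeWhile (\<lambda>x. x = 0) R)"

definition Rset_mpz :: "nat \<Rightarrow> nat \<Rightarrow> nat \<Rightarrow> nat \<Rightarrow> nat list set" where
  "Rset_mpz n m p z = {R \<in> Rset n m. pR R = p \<and> zR R = z}"

definition Mset :: "nat list set" where
  "Mset = {R. \<forall>t \<le> length R. count_list (take t R) 2 \<le> count_list (take t R) 1}"

end

theory Submission
  imports Defs
begin

lemma finite_words: "finite (words k n)"
proof -
  have "words k n = {w. set w \<subseteq> {1..k} \<and> length w = n}" by (auto simp: words_def)
  thus ?thesis using finite_lists_length_eq[of "{1..k}" n] by simp
qed

lemma count_words:
  fixes P :: "nat \<Rightarrow> nat list \<Rightarrow> bool"
  assumes loc: "\<And>j w. j < n \<Longrightarrow> j < length w \<Longrightarrow> P j w = P j (take (Suc j) w)"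
    and cnt: "\<And>j w. j < n \<Longrightarrow> w \<in> words k j \<Longrightarrow> card {x\<in>{1..k}. P j (w@[x])} = c j"
  shows "card {w\<in>words k n. \<forall>j<n. P j w} = (\<Prod>j<n. c j)"
  using loc cnt
proof (induction n)
  case 0
  have "words k 0 = {[]}" by (auto simp: words_def)
  then show ?case by simp
next
  case (Suc n)
  let ?S = "{w\<in>words k n. \<forall>j<n. P j w}"
  have IH: "card ?S = (\<Prod>j<n. c j)"
  proof (rule Suc.IH)
    fix j and w :: "nat list" assume "j < n" "j < length w"
    then show "P j w = P j (take (Suc j) w)" by (intro Suc.prems(1)) simp_all
  next
    fix j and w :: "nat list" assume "j < n" "w \<in> words k j"
    then show "card {x\<in>{1..k}. P j (w@[x])} = c j" by (intro Suc.prems(2)) simp_all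
  qed
  have eq: "{w\<in>words k (Suc n). \<forall>j<Suc n. P j w} =
     (\<lambda>(u,x). u@[x]) ` (SIGMA u:?S. {x\<in>{1..k}. P n (u@[x])})"
  proof
    show "{w\<in>words k (Suc n). \<forall>j<Suc n. P j w} \<subseteq> (\<lambda>(u,x). u@[x]) ` (SIGMA u:?S. {x\<in>{1..k}. P n (u@[x])})"
    proof
      fix w assume w: "w \<in> {w\<in>words k (Suc n). \<forall>j<Suc n. P j w}"
      then have len: "length w = Suc n" and sw: "set w \<subseteq> {1..k}" by (auto simp: words_def)
      then have wd: "w = butlast w @ [last w]"
        by (metis append_butlast_last_id list.size(3) nat.simps(3))
      have "butlast w \<in> ?S"
      proof -
        have "butlast w \<in> words k n" using len sw by (auto simp: words_def dest: in_set_butlastD)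
        moreover have "P j (butlast w)" if "j < n" for j
        proof -
          have "P j (butlast w) = P j (take (Suc j) (butlast w))"
            using Suc.prems(1)[of j "butlast w"] that len by simp
          also have "take (Suc j) (butlast w) = take (Suc j) w"
            using that len by (simp add: take_butlast)
          also have "P j (take (Suc j) w) = P j w"
            using Suc.prems(1)[of j w] that len by simp
          finally show ?thesis using w that by auto
        qed
        ultimately show ?thesis by auto
      qed
      moreover have "last w \<in> {1..k}" using sw len
        by (metis last_in_set list.size(3) nat.simps(3) subsetD)
      moreover have "P n (butlast w @ [last w])" using w wd by auto
      ultimately show "w \<in> (\<lambda>(u,x). u@[x]) ` (SIGMA u:?S. {x\<in>{1..k}. P n (u@[x])})"
        using wd by (intro image_eqI[of _ _ "(butlast w, last w)"]) auto
    qed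
  next
    show "(\<lambda>(u,x). u@[x]) ` (SIGMA u:?S. {x\<in>{1..k}. P n (u@[x])}) \<subseteq> {w\<in>words k (Suc n). \<forall>j<Suc n. P j w}"
    proof clarify
      fix u x assume u: "u \<in> words k n" "\<forall>j<n. P j u" and x: "x \<in> {1..k}" "P n (u@[x])"
      have "u @ [x] \<in> words k (Suc n)" using u x by (auto simp: words_def)
      moreover have "P j (u@[x])" if "j < Suc n" for j
      proof (cases "j = n")
        case True then show ?thesis using x by simp
      next
        case False
        then have jn: "j < n" using that by simp
        have ul: "length u = n" using u by (simp add: words_def)
        have "P j (u@[x]) = P j (take (Suc j) (u@[x]))"
          using Suc.prems(1)[of j "u@[x]"] that ul by simp
        also have "take (Suc j) (u@[x]) = take (Suc j) u" using jn ul by simp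
        also have "P j (take (Suc j) u) = P j u"
          using Suc.prems(1)[of j u] jn ul by simp
        finally show ?thesis using u jn by simp
      qed
      ultimately show "u @ [x] \<in> words k (Suc n) \<and> (\<forall>j<Suc n. P j (u @ [x]))" by blast
    qed
  qed
  have inj: "inj_on (\<lambda>(u,x). u@[x]) (SIGMA u:?S. {x\<in>{1..k}. P n (u@[x])})"
    by (auto simp: inj_on_def)
  have fin: "finite ?S" using finite_words by simp
  have "card {w\<in>words k (Suc n). \<forall>j<Suc n. P j w} = card (SIGMA u:?S. {x\<in>{1..k}. P n (u@[x])})"
    unfolding eq by (rule card_image[OF inj])
  also have "\<dots> = (\<Sum>u\<in>?S. card {x\<in>{1..k}. P n (u@[x])})"
    using fin by (intro card_SigmaI) auto
  also have "\<dots> = (\<Sum>u\<in>?S. c n)"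
    using Suc.prems(2) by (intro sum.cong) auto
  also have "\<dots> = card ?S * c n" by simp
  finally show ?case using IH by simp
qed

lemma card_words: "card (words k n) = k ^ n"
proof -
  have e: "{x\<in>{1..k}. True} = {1..k::nat}" by blast
  have "card {w\<in>words k n. \<forall>j<n. True} = (\<Prod>j<n. k)"
    by (rule count_words) (simp, subst e, simp)
  then show ?thesis by simp
qed

lemma card_below_nth:
  fixes A :: "nat set"
  assumes "finite A" "t < card A"
  shows "card {i\<in>A. i < sorted_list_of_set A ! t} = t"
proof -
  let ?s = "sorted_list_of_set A"
  have ss: "sorted_wrt (<) ?s" using strict_sorted_list_of_set by blast
  have ls: "length ?s = card A" by simp
  have sA: "set ?s = A" using assms by simp
  have "{i\<in>A. i < ?s ! t} = set (take t ?s)"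
  proof
    show "{i\<in>A. i < ?s ! t} \<subseteq> set (take t ?s)"
    proof clarify
      fix x assume x: "x \<in> A" "x < ?s ! t"
      then obtain i where i: "i < length ?s" "x = ?s ! i" using sA by (metis in_set_conv_nth)
      have "i < t"
      proof (rule ccontr)
        assume "\<not> i < t"
        then have "?s ! t \<le> ?s ! i" using i sorted_wrt_nth_less[OF ss, of t i]
          by (cases "t = i") auto
        then show False using x i by simp
      qed
      then show "x \<in> set (take t ?s)" using i by (auto simp: in_set_conv_nth)
    qed
  next
    show "set (take t ?s) \<subseteq> {i\<in>A. i < ?s ! t}"
    proof
      fix x assume "x \<in> set (take t ?s)"
      then obtain i where i: "i < t" "x = ?s ! i" using assms ls by (auto simp: in_set_conv_nth)
      then have "x < ?s ! t" using sorted_wrt_nth_less[OF ss, of i t] assms ls by simp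
      moreover have "x \<in> A"
      proof -
        have "i < length ?s" using i assms ls by simp
        then have "?s ! i \<in> set ?s" by (rule nth_mem)
        then show ?thesis using i sA by simp
      qed
      ultimately show "x \<in> {i\<in>A. i < ?s ! t}" by simp
    qed
  qed
  moreover have "card (set (take t ?s)) = t"
    using distinct_card[of "take t ?s"] assms by simp
  ultimately show ?thesis by simp
qed

lemma nth_card_below:
  fixes A :: "nat set"
  assumes "finite A" "j \<in> A"
  shows "sorted_list_of_set A ! card {i\<in>A. i < j} = j"
proof -
  have "j \<in> set (sorted_list_of_set A)" using assms by simp
  then obtain t where t: "t < length (sorted_list_of_set A)" "sorted_list_of_set A ! t = j"
    by (metis in_set_conv_nth)
  then have "card {i\<in>A. i < j} = t" using card_below_nth[OF assms(1), of t] by simp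
  then show ?thesis using t by simp
qed

lemma nths_sorted:
  assumes "I \<subseteq> {..<length w}"
  shows "nths w I = map (nth w) (sorted_list_of_set I)"
proof -
  let ?n = "length w"
  have "nths w I = nths (map (nth w) [0..<?n]) I" by (simp add: map_nth)
  also have "\<dots> = map (nth w) (nths [0..<?n] I)" by (simp add: nths_map)
  also have "nths [0..<?n] I = filter (\<lambda>i. i \<in> I) [0..<?n]"
  proof -
    have "{i. i < length [0..<?n] \<and> [0..<?n] ! i \<in> I} = I" using assms by auto
    then show ?thesis using filter_eq_nths[of "\<lambda>i. i \<in> I" "[0..<?n]"] by simp
  qed
  also have "filter (\<lambda>i. i \<in> I) [0..<?n] = sorted_list_of_set I"
  proof -
    have "sorted (filter (\<lambda>i. i \<in> I) [0..<?n])"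
      using sorted_wrt_filter[of "(\<le>)" "[0..<?n]"] by simp
    then show ?thesis using assms finite_subset[OF assms]
      by (intro sorted_distinct_set_unique) auto
  qed
  finally show ?thesis .
qed

lemma count_list_take:
  "j \<le> length R \<Longrightarrow> count_list (take j R) a = card {i. i < j \<and> R ! i = a}"
proof (induction j)
  case 0 then show ?case by simp
next
  case (Suc j)
  have "{i. i < Suc j \<and> R ! i = a} = {i. i < j \<and> R ! i = a} \<union> (if R ! j = a then {j} else {})"
    by (auto simp: less_Suc_eq)
  then show ?case using Suc by (simp add: take_Suc_conv_app_nth)
qed

lemma count012: "set xs \<subseteq> {0,1,2::nat} \<Longrightarrow>
  count_list xs 0 + count_list xs 1 + count_list xs 2 = length xs"
  by (induction xs) auto

locale Rctx =
  fixes R :: "nat list" and n m :: nat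
  assumes lenR: "length R = n" and setR: "set R \<subseteq> {0,1,2}"
    and c1: "count_list R 1 = m" and c2: "count_list R 2 = m" and MR: "R \<in> Mset"
begin

definition "I1 = {i. i < n \<and> R ! i = 1}"
definition "I2 = {i. i < n \<and> R ! i = 2}"
definition "rk A j = card {i\<in>A. i < (j::nat)}"
definition "partner j = sorted_list_of_set I1 ! rk I2 j"
definition "Sset j = {i. i < j \<and> R ! i \<noteq> 0 \<and> (\<forall>k'. i < k' \<and> k' < j \<longrightarrow> R ! k' = 0) \<and>
                        (R ! j = 0 \<or> (R ! j = 1 \<and> R ! i = 2))}"
definition "Pw j w = (if R ! j = 2 then w ! j = w ! partner j else (\<forall>i\<in>Sset j. w ! i \<noteq> w ! j))"

lemma Rin: "i < n \<Longrightarrow> R ! i = 0 \<or> R ! i = 1 \<or> R ! i = 2"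
proof -
  assume "i < n"
  then have "R ! i \<in> set R" using lenR by simp
  then have "R ! i \<in> {0,1,2}" using setR by blast
  then show ?thesis by auto
qed

lemma fin1: "finite I1" and fin2: "finite I2"
  by (auto simp: I1_def I2_def)

lemma rk1: "j \<le> n \<Longrightarrow> rk I1 j = count_list (take j R) 1"
proof -
  assume "j \<le> n"
  then have "{i\<in>I1. i < j} = {i. i < j \<and> R ! i = 1}" by (auto simp: I1_def)
  then show ?thesis using count_list_take[of j R 1] \<open>j \<le> n\<close> lenR by (simp add: rk_def)
qed

lemma rk2: "j \<le> n \<Longrightarrow> rk I2 j = count_list (take j R) 2"
proof -
  assume "j \<le> n"
  then have "{i\<in>I2. i < j} = {i. i < j \<and> R ! i = 2}" by (auto simp: I2_def)
  then show ?thesis using count_list_take[of j R 2] \<open>j \<le> n\<close> lenR by (simp add: rk_def)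
qed

lemma cardI1: "card I1 = m"
proof -
  have "I1 = {i\<in>I1. i < n}" by (auto simp: I1_def)
  then have "card I1 = rk I1 n" by (simp add: rk_def)
  then show ?thesis using rk1[of n] lenR c1 by simp
qed

lemma cardI2: "card I2 = m"
proof -
  have "I2 = {i\<in>I2. i < n}" by (auto simp: I2_def)
  then have "card I2 = rk I2 n" by (simp add: rk_def)
  then show ?thesis using rk2[of n] lenR c2 by simp
qed

lemma partner_lt:
  assumes j: "j < n" "R ! j = 2"
  shows "partner j < j" and "rk I2 j < m"
proof -
  let ?t = "rk I2 j"
  have "Suc j \<le> length R" using j lenR by simp
  then have "count_list (take (Suc j) R) 2 \<le> count_list (take (Suc j) R) 1"
    using MR by (auto simp: Mset_def)
  moreover have "take (Suc j) R = take j R @ [R ! j]" using j lenR by (simp add: take_Suc_conv_app_nth)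
  ultimately have "Suc (count_list (take j R) 2) \<le> count_list (take j R) 1" using j by simp
  then have lt: "Suc ?t \<le> rk I1 j" using rk1[of j] rk2[of j] j by simp
  have "rk I1 j \<le> card I1" unfolding rk_def using fin1 by (intro card_mono) auto
  then show tm: "?t < m" using lt cardI1 by simp
  show "partner j < j"
  proof (rule ccontr)
    assume "\<not> partner j < j"
    then have "{i\<in>I1. i < j} \<subseteq> {i\<in>I1. i < sorted_list_of_set I1 ! ?t}"
      by (auto simp: partner_def)
    then have "rk I1 j \<le> card {i\<in>I1. i < sorted_list_of_set I1 ! ?t}"
      unfolding rk_def using fin1 by (intro card_mono) auto
    also have "\<dots> = ?t" using card_below_nth[OF fin1, of ?t] tm cardI1 by simp
    finally show False using lt by simp
  qed
qed

lemma s2_rk: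
  assumes "t < m" shows "sorted_list_of_set I2 ! t \<in> I2" "rk I2 (sorted_list_of_set I2 ! t) = t"
proof -
  have "t < length (sorted_list_of_set I2)" using assms cardI2 by simp
  then have "sorted_list_of_set I2 ! t \<in> set (sorted_list_of_set I2)" by (rule nth_mem)
  then show "sorted_list_of_set I2 ! t \<in> I2" using fin2 by simp
  show "rk I2 (sorted_list_of_set I2 ! t) = t"
    using card_below_nth[OF fin2, of t] assms cardI2 by (simp add: rk_def)
qed

lemma I2_rk:
  assumes "j \<in> I2" shows "sorted_list_of_set I2 ! rk I2 j = j"
  using nth_card_below[OF fin2 assms] by (simp add: rk_def)

lemma mono_ok: "\<forall>t < card I1. sorted_list_of_set I1 ! t < sorted_list_of_set I2 ! t"
proof (intro allI impI)
  fix t assume "t < card I1"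
  then have t: "t < m" using cardI1 by simp
  let ?j = "sorted_list_of_set I2 ! t"
  have "?j \<in> I2" "rk I2 ?j = t" using s2_rk[OF t] by auto
  then have "partner ?j < ?j" using partner_lt[of ?j] by (auto simp: I2_def)
  then show "sorted_list_of_set I1 ! t < ?j" using \<open>rk I2 ?j = t\<close> by (simp add: partner_def)
qed

lemma nths_eq:
  assumes "length w = n"
  shows "(nths w I1 = nths w I2) \<longleftrightarrow> (\<forall>j<n. R ! j = 2 \<longrightarrow> w ! j = w ! partner j)"
proof -
  have "nths w I1 = map (nth w) (sorted_list_of_set I1)"
    using assms by (intro nths_sorted) (auto simp: I1_def)
  moreover have "nths w I2 = map (nth w) (sorted_list_of_set I2)"
    using assms by (intro nths_sorted) (auto simp: I2_def)
  ultimately have "(nths w I1 = nths w I2) \<longleftrightarrow>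
     (\<forall>t<m. w ! (sorted_list_of_set I1 ! t) = w ! (sorted_list_of_set I2 ! t))"
    using cardI1 cardI2 by (simp add: list_eq_iff_nth_eq)
  also have "\<dots> \<longleftrightarrow> (\<forall>j<n. R ! j = 2 \<longrightarrow> w ! j = w ! partner j)"
  proof
    assume H: "\<forall>t<m. w ! (sorted_list_of_set I1 ! t) = w ! (sorted_list_of_set I2 ! t)"
    show "\<forall>j<n. R ! j = 2 \<longrightarrow> w ! j = w ! partner j"
    proof (intro allI impI)
      fix j assume j: "j < n" "R ! j = 2"
      then have "j \<in> I2" by (simp add: I2_def)
      then show "w ! j = w ! partner j" using H partner_lt(2)[OF j] I2_rk[of j]
        by (metis partner_def)
    qed
  next
    assume H: "\<forall>j<n. R ! j = 2 \<longrightarrow> w ! j = w ! partner j"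
    show "\<forall>t<m. w ! (sorted_list_of_set I1 ! t) = w ! (sorted_list_of_set I2 ! t)"
    proof (intro allI impI)
      fix t assume t: "t < m"
      let ?j = "sorted_list_of_set I2 ! t"
      have "?j \<in> I2" "rk I2 ?j = t" using s2_rk[OF t] by auto
      then show "w ! (sorted_list_of_set I1 ! t) = w ! ?j"
        using H by (auto simp: I2_def partner_def)
    qed
  qed
  finally show ?thesis .
qed

lemma Rword_eq: "Rword n I1 I2 = R"
  unfolding Rword_def using lenR Rin
  by (intro nth_equalityI) (auto simp: I1_def I2_def)

lemma Sset_lt: "i \<in> Sset j \<Longrightarrow> i < j"
  by (simp add: Sset_def)

lemma Sset_uniq:
  assumes a: "i1 \<in> Sset j" "i2 \<in> Sset j" shows "i1 = i2"
proof -
  have key: "False" if "a \<in> Sset j" "b \<in> Sset j" "a < b" for a b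
  proof -
    have b: "b < j" "R ! b \<noteq> 0" using that(2) by (simp_all add: Sset_def)
    have "\<forall>k'. a < k' \<and> k' < j \<longrightarrow> R ! k' = 0" using that(1) by (simp add: Sset_def)
    then have "R ! b = 0" using b(1) that(3) by simp
    then show False using b(2) by simp
  qed
  show ?thesis using key[OF a] key[OF a(2) a(1)] linorder_neqE_nat by blast
qed

lemma event_iff:
  assumes "length w = n"
  shows "event_B R w \<longleftrightarrow> (\<forall>j<n. Pw j w)"
proof -
  have e1: "event_B R w \<longleftrightarrow> regular_twins w I1 I2"
  proof
    assume "event_B R w"
    then obtain J1 J2 where J: "regular_twins w J1 J2" "Rword (length w) J1 J2 = R"
      by (auto simp: event_B_def)
    then have sub: "J1 \<subseteq> {0..<n}" "J2 \<subseteq> {0..<n}" "J1 \<inter> J2 = {}"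
      using assms by (auto simp: regular_twins_def monotone_twins_def twins_def)
    have Ri: "R ! i = (if i \<in> J1 then 1 else if i \<in> J2 then 2 else 0)" if "i < n" for i
      using J(2) that assms by (auto simp: Rword_def)
    have "J1 = I1" using sub Ri by (auto simp: I1_def split: if_splits)
    moreover have "J2 = I2"
    proof (intro set_eqI iffI)
      fix x assume x: "x \<in> J2"
      then have "x < n" "x \<notin> J1" using sub by auto
      then show "x \<in> I2" using Ri[of x] x by (simp add: I2_def)
    next
      fix x assume "x \<in> I2"
      then have "x < n" "R ! x = 2" by (auto simp: I2_def)
      then show "x \<in> J2" using Ri[of x] by (auto split: if_splits)
    qed
    ultimately show "regular_twins w I1 I2" using J by simp
  next
    assume "regular_twins w I1 I2"
    then show "event_B R w" unfolding event_B_def using Rword_eq assms by auto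
  qed
  have e2: "monotone_twins w I1 I2 \<longleftrightarrow> (\<forall>j<n. R ! j = 2 \<longrightarrow> w ! j = w ! partner j)"
  proof -
    have a1: "I1 \<subseteq> {0..<length w}" "I2 \<subseteq> {0..<length w}" "I1 \<inter> I2 = {}"
      using assms by (auto simp: I1_def I2_def)
    show ?thesis unfolding monotone_twins_def twins_def
      using a1 mono_ok nths_eq[OF assms] by blast
  qed
  have e3: "((\<not> (\<exists>i j. i < j \<and> j < n \<and> R ! i = 2 \<and> R ! j = 1 \<and>
            (\<forall>k'. i < k' \<and> k' < j \<longrightarrow> R ! k' = 0) \<and> w ! i = w ! j)) \<and>
       (\<not> (\<exists>i j. i < j \<and> j < n \<and> R ! i \<in> {1,2} \<and> R ! j = 0 \<and>
            (\<forall>k'. i < k' \<and> k' < j \<longrightarrow> R ! k' = 0) \<and> w ! i = w ! j)))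
      \<longleftrightarrow> (\<forall>j<n. R ! j \<noteq> 2 \<longrightarrow> (\<forall>i\<in>Sset j. w ! i \<noteq> w ! j))"
  proof
    assume H: "(\<not> (\<exists>i j. i < j \<and> j < n \<and> R ! i = 2 \<and> R ! j = 1 \<and>
            (\<forall>k'. i < k' \<and> k' < j \<longrightarrow> R ! k' = 0) \<and> w ! i = w ! j)) \<and>
       (\<not> (\<exists>i j. i < j \<and> j < n \<and> R ! i \<in> {1,2} \<and> R ! j = 0 \<and>
            (\<forall>k'. i < k' \<and> k' < j \<longrightarrow> R ! k' = 0) \<and> w ! i = w ! j))"
    show "\<forall>j<n. R ! j \<noteq> 2 \<longrightarrow> (\<forall>i\<in>Sset j. w ! i \<noteq> w ! j)"
    proof (intro allI impI ballI)
      fix j i assume j: "j < n" "R ! j \<noteq> 2" and i: "i \<in> Sset j"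
      then have il: "i < n" by (auto simp: Sset_def)
      show "w ! i \<noteq> w ! j"
      proof
        assume eq: "w ! i = w ! j"
        have sc: "i < j \<and> R ! i \<noteq> 0 \<and> (\<forall>k'. i < k' \<and> k' < j \<longrightarrow> R ! k' = 0) \<and>
          (R ! j = 0 \<or> (R ! j = 1 \<and> R ! i = 2))" using i unfolding Sset_def mem_Collect_eq .
        have si1: "i < j" using sc by blast
        have si2: "R ! i \<noteq> 0" using sc by blast
        have si3: "\<forall>k'. i < k' \<and> k' < j \<longrightarrow> R ! k' = 0" using sc by blast
        have si4: "R ! j = 0 \<or> (R ! j = 1 \<and> R ! i = 2)" using sc by blast
        note si = si1 si2 si3 si4
        show False
        proof (cases "R ! j = 0")
          case True
          have "R ! i \<in> {1,2}" using Rin[OF il] si(2) by simp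
          have "\<exists>i j. i < j \<and> j < n \<and> R ! i \<in> {1,2} \<and> R ! j = 0 \<and>
            (\<forall>k'. i < k' \<and> k' < j \<longrightarrow> R ! k' = 0) \<and> w ! i = w ! j"
            apply (rule exI[of _ i], rule exI[of _ j])
            by (intro conjI; fact)
          then show False using conjunct2[OF H] by contradiction
        next
          case False
          then have a1: "R ! j = 1" and a2: "R ! i = 2" using si(4) by simp_all
          have "\<exists>i j. i < j \<and> j < n \<and> R ! i = 2 \<and> R ! j = 1 \<and>
            (\<forall>k'. i < k' \<and> k' < j \<longrightarrow> R ! k' = 0) \<and> w ! i = w ! j"
            apply (rule exI[of _ i], rule exI[of _ j])
            by (intro conjI; fact)
          then show False using conjunct1[OF H] by contradiction
        qed
      qed
    qed
  next
    assume H: "\<forall>j<n. R ! j \<noteq> 2 \<longrightarrow> (\<forall>i\<in>Sset j. w ! i \<noteq> w ! j)"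
    show "(\<not> (\<exists>i j. i < j \<and> j < n \<and> R ! i = 2 \<and> R ! j = 1 \<and>
            (\<forall>k'. i < k' \<and> k' < j \<longrightarrow> R ! k' = 0) \<and> w ! i = w ! j)) \<and>
       (\<not> (\<exists>i j. i < j \<and> j < n \<and> R ! i \<in> {1,2} \<and> R ! j = 0 \<and>
            (\<forall>k'. i < k' \<and> k' < j \<longrightarrow> R ! k' = 0) \<and> w ! i = w ! j))"
    proof (intro conjI notI)
      assume "\<exists>i j. i < j \<and> j < n \<and> R ! i = 2 \<and> R ! j = 1 \<and>
            (\<forall>k'. i < k' \<and> k' < j \<longrightarrow> R ! k' = 0) \<and> w ! i = w ! j"
      then obtain i j where ij: "i < j \<and> j < n \<and> R ! i = 2 \<and> R ! j = 1 \<and>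
            (\<forall>k'. i < k' \<and> k' < j \<longrightarrow> R ! k' = 0) \<and> w ! i = w ! j" by blast
      then have "i \<in> Sset j" by (simp add: Sset_def)
      moreover have "j < n" "R ! j \<noteq> 2" using ij by auto
      ultimately have "w ! i \<noteq> w ! j" using H[rule_format] by metis
      moreover have "w ! i = w ! j" using ij by (elim conjE)
      ultimately show False by contradiction
    next
      assume "\<exists>i j. i < j \<and> j < n \<and> R ! i \<in> {1,2} \<and> R ! j = 0 \<and>
            (\<forall>k'. i < k' \<and> k' < j \<longrightarrow> R ! k' = 0) \<and> w ! i = w ! j"
      then obtain i j where ij: "i < j \<and> j < n \<and> R ! i \<in> {1,2} \<and> R ! j = 0 \<and>
            (\<forall>k'. i < k' \<and> k' < j \<longrightarrow> R ! k' = 0) \<and> w ! i = w ! j" by blast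
      then have "i \<in> Sset j" by (auto simp: Sset_def)
      moreover have "j < n" "R ! j \<noteq> 2" using ij by auto
      ultimately have "w ! i \<noteq> w ! j" using H[rule_format] by metis
      moreover have "w ! i = w ! j" using ij by (elim conjE)
      ultimately show False by contradiction
    qed
  qed
  have "regular_twins w I1 I2 \<longleftrightarrow> monotone_twins w I1 I2 \<and>
      (\<forall>j<n. R ! j \<noteq> 2 \<longrightarrow> (\<forall>i\<in>Sset j. w ! i \<noteq> w ! j))"
  proof -
    have Rw: "Rword (length w) I1 I2 = R" using Rword_eq assms by simp
    show ?thesis unfolding regular_twins_def Let_def assms Rword_eq e3 by (rule refl)
  qed
  moreover have "(\<forall>j<n. Pw j w) \<longleftrightarrow> (\<forall>j<n. R ! j = 2 \<longrightarrow> w ! j = w ! partner j) \<and>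
      (\<forall>j<n. R ! j \<noteq> 2 \<longrightarrow> (\<forall>i\<in>Sset j. w ! i \<noteq> w ! j))"
    unfolding Pw_def if_bool_eq_conj imp_conjR all_conj_distrib by (simp only: not_def)
  ultimately show ?thesis unfolding e1 e2 by (simp only:)
qed


definition "cc k j = (if R ! j = 2 then 1 else if Sset j = {} then k else k - (1::nat))"
definition "AN = {j. j < n \<and> R ! j \<noteq> 2 \<and> Sset j \<noteq> {}}"
definition "AF = {j. j < n \<and> R ! j \<noteq> 2 \<and> Sset j = {}}"

lemma Pw_loc:
  assumes "j < n" "j < length w"
  shows "Pw j w = Pw j (take (Suc j) w)"
proof (cases "R ! j = 2")
  case True
  then have "partner j < j" using partner_lt(1)[OF assms(1)] by simp
  then show ?thesis using True by (simp add: Pw_def)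
next
  case False
  have "take (Suc j) w ! i = w ! i" if "i \<in> Sset j" for i using Sset_lt[OF that] by simp
  then show ?thesis using False by (simp add: Pw_def)
qed

lemma Pw_cnt:
  assumes j: "j < n" and u: "u \<in> words k j"
  shows "card {x\<in>{1..k}. Pw j (u@[x])} = cc k j"
proof -
  have lu: "length u = j" and su: "set u \<subseteq> {1..k}" using u by (auto simp: words_def)
  have nj: "(u@[x]) ! j = x" for x using lu by (simp add: nth_append)
  have ni: "(u@[x]) ! i = u ! i" if "i < j" for i x using that lu by (simp add: nth_append)
  have uin: "u ! i \<in> {1..k}" if "i < j" for i
  proof -
    have "u ! i \<in> set u" using lu that by simp
    then show ?thesis using su by blast
  qed
  show ?thesis
  proof (cases "R ! j = 2")
    case True
    have pj: "partner j < j" using partner_lt(1)[OF j True] .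
    have "{x\<in>{1..k}. Pw j (u@[x])} = {u ! partner j}"
      using True nj ni[OF pj] uin[OF pj] by (auto simp: Pw_def)
    then show ?thesis using True by (simp add: cc_def)
  next
    case False
    show ?thesis
    proof (cases "Sset j = {}")
      case True
      have "{x\<in>{1..k}. Pw j (u@[x])} = {1..k}" using False True by (auto simp: Pw_def)
      then show ?thesis using False True by (simp add: cc_def)
    next
      case True2: False
      then obtain i0 where i0: "i0 \<in> Sset j" by blast
      then have S: "Sset j = {i0}" using Sset_uniq by blast
      have i0j: "i0 < j" using Sset_lt[OF i0] .
      have "{x\<in>{1..k}. Pw j (u@[x])} = {1..k} - {u ! i0}"
        using False S nj ni[OF i0j] by (auto simp: Pw_def)
      then have "card {x\<in>{1..k}. Pw j (u@[x])} = k - 1"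
        using uin[OF i0j] by simp
      then show ?thesis using False True2 by (simp add: cc_def)
    qed
  qed
qed

lemma prod_cc: "(\<Prod>j<n. cc k j) = k ^ card AF * (k - 1) ^ card AN"
  and card_parts: "card I2 + card AF + card AN = n"
proof -
  have U: "{..<n} = I2 \<union> (AF \<union> AN)" by (auto simp: I2_def AF_def AN_def)
  have D1: "I2 \<inter> (AF \<union> AN) = {}" "AF \<inter> AN = {}" by (auto simp: I2_def AF_def AN_def)
  have F: "finite I2" "finite AF" "finite AN" by (auto simp: I2_def AF_def AN_def)
  have "(\<Prod>j<n. cc k j) = (\<Prod>j\<in>I2. cc k j) * ((\<Prod>j\<in>AF. cc k j) * (\<Prod>j\<in>AN. cc k j))"
    unfolding U using D1 F by (simp add: prod.union_disjoint)
  also have "(\<Prod>j\<in>I2. cc k j) = (\<Prod>j\<in>I2. 1)" by (rule prod.cong) (auto simp: I2_def cc_def)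
  also have "(\<Prod>j\<in>AF. cc k j) = (\<Prod>j\<in>AF. k)" by (rule prod.cong) (auto simp: AF_def cc_def)
  also have "(\<Prod>j\<in>AN. cc k j) = (\<Prod>j\<in>AN. k - 1)" by (rule prod.cong) (auto simp: AN_def cc_def)
  finally show "(\<Prod>j<n. cc k j) = k ^ card AF * (k - 1) ^ card AN" by simp
  have "n = card ({..<n}::nat set)" by simp
  also have "\<dots> = card I2 + (card AF + card AN)"
    unfolding U using D1 F by (simp add: card_Un_disjoint)
  finally show "card I2 + card AF + card AN = n" by simp
qed

lemma main_count: "card {w\<in>words k n. event_B R w} = k ^ card AF * (k - 1) ^ card AN"
proof -
  have "{w\<in>words k n. event_B R w} = {w\<in>words k n. \<forall>j<n. Pw j w}"
    using event_iff by (auto simp: words_def)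
  also have "card \<dots> = (\<Prod>j<n. cc k j)"
    apply (rule count_words)
     apply (erule (1) Pw_loc)
    apply (erule (1) Pw_cnt)
    done
  finally show ?thesis using prod_cc by simp
qed


lemma card_AN1: "card {j. j < n \<and> R ! j = 1 \<and> Sset j \<noteq> {}} = pR R"
proof -
  let ?PP = "{(i,j). i < j \<and> j < length R \<and> R ! i = 2 \<and> R ! j = 1 \<and>
                       (\<forall>k'. i < k' \<and> k' < j \<longrightarrow> R ! k' = 0)}"
  have mem: "(i,j) \<in> ?PP \<longleftrightarrow> j < n \<and> R ! j = 1 \<and> i \<in> Sset j" for i j
  proof -
    have a: "(i,j) \<in> ?PP \<longleftrightarrow> i < j \<and> j < n \<and> R ! i = 2 \<and> R ! j = 1 \<and>
                       (\<forall>k'. i < k' \<and> k' < j \<longrightarrow> R ! k' = 0)" using lenR by simp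
    have b: "i \<in> Sset j \<longleftrightarrow> i < j \<and> R ! i \<noteq> 0 \<and> (\<forall>k'. i < k' \<and> k' < j \<longrightarrow> R ! k' = 0) \<and>
                        (R ! j = 0 \<or> (R ! j = 1 \<and> R ! i = 2))" by (simp add: Sset_def)
    show ?thesis unfolding a b by (cases "R ! j = 1"; cases "R ! i = 2") (simp_all add: conj_ac)
  qed
  have inj: "inj_on snd ?PP"
  proof (rule inj_onI)
    fix x y assume x: "x \<in> ?PP" and y: "y \<in> ?PP" and e: "snd x = snd y"
    obtain i j where xi: "x = (i,j)" by (cases x)
    obtain i' j' where yi: "y = (i',j')" by (cases y)
    have "j' = j" using e xi yi by simp
    have "i \<in> Sset j" using mem[of i j] x xi by simp
    moreover have "i' \<in> Sset j" using mem[of i' j] y yi \<open>j' = j\<close> by simp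
    ultimately have "i \<in> Sset j" "i' \<in> Sset j" by simp_all
    then have "i = i'" by (rule Sset_uniq)
    then show "x = y" using xi yi \<open>j' = j\<close> by simp
  qed
  have img: "snd ` ?PP = {j. j < n \<and> R ! j = 1 \<and> Sset j \<noteq> {}}"
  proof (intro set_eqI iffI)
    fix j assume "j \<in> snd ` ?PP"
    then obtain x where x: "x \<in> ?PP" "j = snd x" by (rule imageE)
    obtain i j' where "x = (i,j')" by (cases x)
    then have "(i,j) \<in> ?PP" using x by simp
    then have "j < n" "R ! j = 1" "i \<in> Sset j" using mem[of i j] by simp_all
    then show "j \<in> {j. j < n \<and> R ! j = 1 \<and> Sset j \<noteq> {}}" by blast
  next
    fix j assume j: "j \<in> {j. j < n \<and> R ! j = 1 \<and> Sset j \<noteq> {}}"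
    then obtain i where "i \<in> Sset j" by blast
    then have "(i,j) \<in> ?PP" using mem[of i j] j by simp
    then show "j \<in> snd ` ?PP" by (rule rev_image_eqI) simp
  qed
  have "pR R = card ?PP" by (simp add: pR_def)
  also have "\<dots> = card (snd ` ?PP)" using inj by (simp add: card_image)
  finally show ?thesis using img by simp
qed

lemma z_props:
  shows "zR R \<le> n" and "\<And>j. j < zR R \<Longrightarrow> R ! j = 0" and "zR R < n \<Longrightarrow> R ! zR R \<noteq> 0"
proof -
  show "zR R \<le> n" unfolding zR_def using lenR length_takeWhile_le[of "\<lambda>x. x = 0" R] by simp
  show "R ! j = 0" if "j < zR R" for j
  proof -
    have "takeWhile (\<lambda>x. x = 0) R ! j = R ! j" using that unfolding zR_def by (rule takeWhile_nth)
    moreover have "takeWhile (\<lambda>x. x = 0) R ! j \<in> set (takeWhile (\<lambda>x. x = 0) R)"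
      using that unfolding zR_def by (rule nth_mem)
    ultimately show ?thesis using set_takeWhileD by fastforce
  qed
  show "R ! zR R \<noteq> 0" if "zR R < n"
    using nth_length_takeWhile[of "\<lambda>x. x = 0" R] that lenR unfolding zR_def by simp
qed

lemma card_AN0: "card {j. j < n \<and> R ! j = 0 \<and> Sset j \<noteq> {}} = (n - 2*m) - zR R"
  and z_le: "zR R \<le> n - 2*m"
proof -
  let ?Z = "{j. j < n \<and> R ! j = 0}"
  let ?z = "zR R"
  have cZ: "card ?Z = n - 2*m"
  proof -
    have "card ?Z = count_list R 0" using count_list_take[of n R 0] lenR by simp
    then show ?thesis using count012[OF setR] c1 c2 lenR by simp
  qed
  have sub: "{..<?z} \<subseteq> ?Z"
  proof
    fix x assume "x \<in> {..<?z}"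
    then have x: "x < ?z" by simp
    then have "R ! x = 0" by (rule z_props(2))
    moreover have "x < n" using x z_props(1) by simp
    ultimately show "x \<in> ?Z" by simp
  qed
  have eq: "{j. j < n \<and> R ! j = 0 \<and> Sset j \<noteq> {}} = ?Z - {..<?z}"
  proof (intro set_eqI iffI)
    fix j assume j: "j \<in> {j. j < n \<and> R ! j = 0 \<and> Sset j \<noteq> {}}"
    then obtain i where i: "i \<in> Sset j" by blast
    have "i < j" "R ! i \<noteq> 0" using i by (simp_all add: Sset_def)
    have "\<not> i < ?z"
    proof
      assume "i < ?z"
      then have "R ! i = 0" by (rule z_props(2))
      then show False using \<open>R ! i \<noteq> 0\<close> by simp
    qed
    then have "\<not> j < ?z" using \<open>i < j\<close> by simp
    then show "j \<in> ?Z - {..<?z}" using j by simp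
  next
    fix j assume j: "j \<in> ?Z - {..<?z}"
    then have jn: "j < n" and j0: "R ! j = 0" and jz: "?z \<le> j" by auto
    have "?z \<noteq> j"
    proof
      assume zj: "?z = j"
      then have "?z < n" using jn by simp
      then have "R ! ?z \<noteq> 0" by (rule z_props(3))
      then show False using zj j0 by simp
    qed
    then have zj: "?z < j" using jz by simp
    let ?T = "{i. i < j \<and> R ! i \<noteq> 0}"
    have fT: "finite ?T" by simp
    have "?z < n" using zj jn by simp
    then have "R ! ?z \<noteq> 0" by (rule z_props(3))
    then have zT: "?z \<in> ?T" using zj by simp
    obtain i where idef: "i = Max ?T" by blast
    have iT: "i \<in> ?T" unfolding idef using fT zT by (intro Max_in) auto
    then have ij: "i < j" and iR: "R ! i \<noteq> 0" by simp_all
    have imax: "k' \<le> i" if "k' \<in> ?T" for k' unfolding idef using fT that by (rule Max_ge)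
    have btw: "\<forall>k'. i < k' \<and> k' < j \<longrightarrow> R ! k' = 0"
    proof (intro allI impI)
      fix k' assume k': "i < k' \<and> k' < j"
      show "R ! k' = 0"
      proof (rule ccontr)
        assume "R ! k' \<noteq> 0"
        then have "k' \<in> ?T" using k' by simp
        then have "k' \<le> i" by (rule imax)
        then show False using k' by linarith
      qed
    qed
    have "i \<in> Sset j" unfolding Sset_def mem_Collect_eq using ij iR btw j0 by blast
    then have "Sset j \<noteq> {}" by blast
    then show "j \<in> {j. j < n \<and> R ! j = 0 \<and> Sset j \<noteq> {}}" using jn j0 by simp
  qed
  have "card (?Z - {..<?z}) = card ?Z - card {..<?z}"
    using sub by (intro card_Diff_subset) auto
  then show "card {j. j < n \<and> R ! j = 0 \<and> Sset j \<noteq> {}} = (n - 2*m) - zR R"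
    using eq cZ by simp
  have "card {..<?z} \<le> card ?Z" using sub by (intro card_mono) auto
  then show "zR R \<le> n - 2*m" using cZ by simp
qed

lemma card_AN: "card AN = pR R + (n - 2*m - zR R)"
proof -
  have U: "AN = {j. j < n \<and> R ! j = 1 \<and> Sset j \<noteq> {}} \<union> {j. j < n \<and> R ! j = 0 \<and> Sset j \<noteq> {}}"
  proof (intro set_eqI iffI)
    fix x assume "x \<in> AN"
    then have x: "x < n" "R ! x \<noteq> 2" "Sset x \<noteq> {}" by (auto simp: AN_def)
    then have "R ! x = 0 \<or> R ! x = 1" using Rin[of x] by auto
    then show "x \<in> {j. j < n \<and> R ! j = 1 \<and> Sset j \<noteq> {}} \<union> {j. j < n \<and> R ! j = 0 \<and> Sset j \<noteq> {}}"
      using x by auto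
  next
    fix x assume "x \<in> {j. j < n \<and> R ! j = 1 \<and> Sset j \<noteq> {}} \<union> {j. j < n \<and> R ! j = 0 \<and> Sset j \<noteq> {}}"
    then show "x \<in> AN" by (auto simp: AN_def)
  qed
  have "card AN = card {j. j < n \<and> R ! j = 1 \<and> Sset j \<noteq> {}} + card {j. j < n \<and> R ! j = 0 \<and> Sset j \<noteq> {}}"
    unfolding U by (rule card_Un_disjoint) auto
  then show ?thesis using card_AN1 card_AN0 by simp
qed

lemma two_m: "2 * m \<le> n"
  using count012[OF setR] c1 c2 lenR by simp
end

theorem lemma19:
  fixes k n m p z :: nat and R :: "nat list"
  assumes "k \<ge> 2"
    and "R \<in> Rset_mpz n m p z \<inter> Mset"
  shows "real (card {w \<in> words k n. event_B R w}) / real (card (words k n))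
           = (1 / real k) ^ m * (1 - 1 / real k) ^ (p + n - 2 * m - z)"
proof -
  from assms(2) have R: "length R = n" "set R \<subseteq> {0,1,2}" "count_list R 1 = m"
    "count_list R 2 = m" "pR R = p" "zR R = z" "R \<in> Mset"
    by (auto simp: Rset_mpz_def Rset_def)
  interpret Rctx R n m using R by unfold_locales auto
  have cnt: "card {w\<in>words k n. event_B R w} = k ^ card AF * (k - 1) ^ card AN"
    by (rule main_count)
  have q: "card AN = p + n - 2*m - z" using card_AN R(5,6) two_m z_le by simp
  have nsum: "n = m + card AF + card AN" using card_parts cardI2 by simp
  have kpos: "real k > 0" using assms(1) by simp
  have k1: "real (k - 1) = real k - 1" using assms(1) by (simp add: of_nat_diff)
  have "real (card {w \<in> words k n. event_B R w}) / real (card (words k n))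
      = real k ^ card AF * (real k - 1) ^ card AN / real k ^ (card AF + m + card AN)"
    using cnt card_words[of k n] nsum k1 by (simp add: add.commute add.left_commute)
  also have "\<dots> = (1 / real k) ^ m * ((real k - 1) / real k) ^ card AN"
    using kpos by (simp add: power_add field_simps power_divide)
  also have "(real k - 1) / real k = 1 - 1 / real k" using kpos by (simp add: field_simps)
  finally show ?thesis using q by simp
qed

end
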